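(* Let $G$ be a connected graph of order at least three. If $D$ is a $\gamma_{\rm cer}$-set of $G$ and $D\cap L_G\neq\emptyset$, then $D$ is not a $\gamma$-set of $G$. Equivalently, if $D$ is a $\gamma_{\rm cer}$-set of $G$ and $\gamma(G)=\gamma_{\rm cer}(G)$, then $L_G\cap D=\emptyset$ and $S_G\subseteq D$.
   Context: All graphs are finite and simple. $L_G$ is the set of leaves (vertices of degree one) of $G$ and $S_G$ is the set of supports (vertices adjacent to a leaf). A set $D\subseteq V_G$ is a dominating set of $G$ if every vertex of $V_G-D$ has a neighbor in $D$; $\gamma(G)$ is the minimum cardinality of a dominating set, and a $\gamma$-set is a dominating set of cardinality $\gamma(G)$. A set $D\subseteq V_G$ is a certified dominating set of $G$ if $D$ is a dominating set of $G$ and every vertex of $D$ has either zero or at least two neighbors in $V_G-D$; $\gamma_{\rm cer}(G)$ is the minimum cardinality of a certified dominating set, and a $\gamma_{\rm cer}$-set is a certified dominating set of cardinality $\gamma_{\rm cer}(G)$. *)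

theory Defs
  imports Main
begin

definition simple_graph :: "'a set \<Rightarrow> ('a \<Rightarrow> 'a \<Rightarrow> bool) \<Rightarrow> bool" where
  "simple_graph V E \<longleftrightarrow> finite V \<and> (\<forall>u v. E u v \<longrightarrow> u \<in> V \<and> v \<in> V)
     \<and> (\<forall>u v. E u v \<longrightarrow> E v u) \<and> (\<forall>v. \<not> E v v)"

definition connected_graph :: "'a set \<Rightarrow> ('a \<Rightarrow> 'a \<Rightarrow> bool) \<Rightarrow> bool" where
  "connected_graph V E \<longleftrightarrow> V \<noteq> {} \<and>
     (\<forall>u\<in>V. \<forall>v\<in>V. (u, v) \<in> {(x, y). x \<in> V \<and> y \<in> V \<and> E x y}\<^sup>*)"

definition nbhd :: "'a set \<Rightarrow> ('a \<Rightarrow> 'a \<Rightarrow> bool) \<Rightarrow> 'a \<Rightarrow> 'a set" where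
  "nbhd V E v = {u \<in> V. E v u}"

definition leaves :: "'a set \<Rightarrow> ('a \<Rightarrow> 'a \<Rightarrow> bool) \<Rightarrow> 'a set" where
  "leaves V E = {v \<in> V. card (nbhd V E v) = 1}"

definition supports :: "'a set \<Rightarrow> ('a \<Rightarrow> 'a \<Rightarrow> bool) \<Rightarrow> 'a set" where
  "supports V E = {v \<in> V. \<exists>u \<in> leaves V E. E v u}"

definition dominating_set :: "'a set \<Rightarrow> ('a \<Rightarrow> 'a \<Rightarrow> bool) \<Rightarrow> 'a set \<Rightarrow> bool" where
  "dominating_set V E D \<longleftrightarrow> D \<subseteq> V \<and> (\<forall>v \<in> V - D. \<exists>u \<in> D. E v u)"

definition certified_dominating_set :: "'a set \<Rightarrow> ('a \<Rightarrow> 'a \<Rightarrow> bool) \<Rightarrow> 'a set \<Rightarrow> bool" where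
  "certified_dominating_set V E D \<longleftrightarrow> dominating_set V E D \<and>
     (\<forall>v \<in> D. card (nbhd V E v \<inter> (V - D)) = 0 \<or> card (nbhd V E v \<inter> (V - D)) \<ge> 2)"

definition domination_number :: "'a set \<Rightarrow> ('a \<Rightarrow> 'a \<Rightarrow> bool) \<Rightarrow> nat" where
  "domination_number V E = Min {card D | D. dominating_set V E D}"

definition cer_domination_number :: "'a set \<Rightarrow> ('a \<Rightarrow> 'a \<Rightarrow> bool) \<Rightarrow> nat" where
  "cer_domination_number V E = Min {card D | D. certified_dominating_set V E D}"

definition gamma_set :: "'a set \<Rightarrow> ('a \<Rightarrow> 'a \<Rightarrow> bool) \<Rightarrow> 'a set \<Rightarrow> bool" where
  "gamma_set V E D \<longleftrightarrow> dominating_set V E D \<and> card D = domination_number V E"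

definition gamma_cer_set :: "'a set \<Rightarrow> ('a \<Rightarrow> 'a \<Rightarrow> bool) \<Rightarrow> 'a set \<Rightarrow> bool" where
  "gamma_cer_set V E D \<longleftrightarrow> certified_dominating_set V E D \<and> card D = cer_domination_number V E"

end

theory Submission
  imports Defs
begin

lemma leaf_nb:
  assumes "x \<in> leaves V E"
  obtains s where "nbhd V E x = {s}"
  using assms unfolding leaves_def by (auto simp: card_Suc_eq)

lemma dom_min_le:
  assumes "simple_graph V E" "dominating_set V E D"
  shows "domination_number V E \<le> card D"
proof -
  have f: "finite V" using assms(1) by (simp add: simple_graph_def)
  have "{card D | D. dominating_set V E D} \<subseteq> {..card V}"
    using f by (auto simp: dominating_set_def card_mono)
  hence "finite {card D | D. dominating_set V E D}" by (rule finite_subset) simp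
  thus ?thesis unfolding domination_number_def using assms(2) by (auto intro: Min_le)
qed

lemma part1:
  assumes g: "simple_graph V E" and c: "gamma_cer_set V E D" and x: "x \<in> D" "x \<in> leaves V E"
      and gs: "gamma_set V E D"
  shows False
proof -
  obtain s where s: "nbhd V E x = {s}" using leaf_nb[OF x(2)] by blast
  have Es: "E x s" "s \<in> V" using s unfolding nbhd_def by auto
  have f: "finite V" using g by (simp add: simple_graph_def)
  have DV: "D \<subseteq> V" using c by (simp add: gamma_cer_set_def certified_dominating_set_def dominating_set_def)
  have sD: "s \<in> D"
  proof (rule ccontr)
    assume "s \<notin> D"
    hence "nbhd V E x \<inter> (V - D) = {s}" using s Es by auto
    thus False using c x(1) by (auto simp: gamma_cer_set_def certified_dominating_set_def)
  qed
  have sx: "s \<noteq> x" using Es g by (auto simp: simple_graph_def)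
  have "dominating_set V E (D - {x})"
  proof -
    have "\<forall>v\<in>V - D. \<exists>u\<in>D. E v u" using gs by (simp add: gamma_set_def dominating_set_def)
    moreover have "\<forall>v\<in>V - D. \<not> E v x \<or> v = s"
    proof (intro ballI)
      fix v assume "v \<in> V - D"
      show "\<not> E v x \<or> v = s"
      proof (rule ccontr)
        assume "\<not> (\<not> E v x \<or> v = s)"
        hence "E x v" "v \<noteq> s" using g by (auto simp: simple_graph_def)
        hence "v \<in> nbhd V E x" using \<open>v \<in> V - D\<close> by (auto simp: nbhd_def)
        thus False using s \<open>v \<noteq> s\<close> by auto
      qed
    qed
    ultimately have "\<forall>v\<in>V - (D - {x}). \<exists>u\<in>D - {x}. E v u"
    proof (intro ballI)
      fix v assume v: "v \<in> V - (D - {x})"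
      show "\<exists>u\<in>D - {x}. E v u"
      proof (cases "v = x")
        case True thus ?thesis using sD sx Es by auto
      next
        case False
        hence vV: "v \<in> V - D" using v by auto
        then obtain u where u: "u \<in> D" "E v u" using \<open>\<forall>v\<in>V - D. \<exists>u\<in>D. E v u\<close> by blast
        have "u \<noteq> x" using \<open>\<forall>v\<in>V - D. \<not> E v x \<or> v = s\<close> vV u sD by auto
        thus ?thesis using u by auto
      qed
    qed
    thus ?thesis using DV by (auto simp: dominating_set_def)
  qed
  hence "domination_number V E \<le> card (D - {x})" by (rule dom_min_le[OF g])
  moreover have "card (D - {x}) < card D"
    using x(1) finite_subset[OF DV f] by (metis card_Diff1_less)
  ultimately show False using gs by (simp add: gamma_set_def)
qed

theorem lemma2p10:
  fixes V :: "'a set" and E :: "'a \<Rightarrow> 'a \<Rightarrow> bool"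
  assumes "simple_graph V E" and "connected_graph V E" and "card V \<ge> 3"
  shows "(\<forall>D. gamma_cer_set V E D \<and> D \<inter> leaves V E \<noteq> {} \<longrightarrow> \<not> gamma_set V E D)
    \<and> (\<forall>D. gamma_cer_set V E D \<and> domination_number V E = cer_domination_number V E
          \<longrightarrow> leaves V E \<inter> D = {} \<and> supports V E \<subseteq> D)"
proof (intro conjI allI impI)
  fix D assume "gamma_cer_set V E D \<and> D \<inter> leaves V E \<noteq> {}"
  thus "\<not> gamma_set V E D" using part1[OF assms(1)] by blast
next
  fix D assume h: "gamma_cer_set V E D \<and> domination_number V E = cer_domination_number V E"
  hence gs: "gamma_set V E D"
    by (auto simp: gamma_set_def gamma_cer_set_def certified_dominating_set_def)
  show L: "leaves V E \<inter> D = {}" using part1[OF assms(1)] h gs by blast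
  show "supports V E \<subseteq> D"
  proof
    fix s assume "s \<in> supports V E"
    then obtain x where x: "x \<in> leaves V E" "E s x" "s \<in> V" by (auto simp: supports_def)
    obtain t where t: "nbhd V E x = {t}" using leaf_nb[OF x(1)] by blast
    have "s \<in> nbhd V E x" using x assms(1) by (auto simp: nbhd_def simple_graph_def)
    hence st: "s = t" using t by auto
    have xV: "x \<in> V - D" using x L by (auto simp: leaves_def)
    then obtain u where u: "u \<in> D" "E x u" using gs by (auto simp: gamma_set_def dominating_set_def)
    have "u \<in> nbhd V E x" using u assms(1) by (auto simp: nbhd_def simple_graph_def)
    thus "s \<in> D" using t st u by auto
  qed
qed

end
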